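(* Let $G$ be a strongly connected weighted digraph and consider a finite number of tokens initially located at some of its nodes. Suppose that, at each iteration, each node that possesses a token passes it to one of its out-neighbors via an out-edge of minimum weight (among its out-edges) and adds a positive constant to the weight of that edge. Then after a finite number of iterations every node has been visited by (i.e., has held) at least one token.
   Context: A weighted digraph $G=(V,E,A)$ has finite vertex set $V$, edge set $E\subseteq V\times V$, and positive weights $a_{ij}$ on the edges $(v_i,v_j)\in E$. It is strongly connected if there is a directed path between every ordered pair of distinct vertices. An out-neighbor of $v$ is a vertex $w$ with $(v,w)\in E$. *)

theory Defs
  imports Complex_Main
begin

definition weighted_digraph :: "'v set \<Rightarrow> ('v \<times> 'v) set \<Rightarrow> ('v \<times> 'v \<Rightarrow> real) \<Rightarrow> bool" where
  "weighted_digraph V E a \<longleftrightarrow> finite V \<and> E \<subseteq> V \<times> V \<and> (\<forall>e\<in>E. a e > 0)"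

definition strongly_connected :: "'v set \<Rightarrow> ('v \<times> 'v) set \<Rightarrow> bool" where
  "strongly_connected V E \<longleftrightarrow> (\<forall>u\<in>V. \<forall>v\<in>V. u \<noteq> v \<longrightarrow> (u, v) \<in> E\<^sup>+)"

definition min_out_neighbor :: "('v \<times> 'v) set \<Rightarrow> ('v \<times> 'v \<Rightarrow> real) \<Rightarrow> 'v \<Rightarrow> 'v \<Rightarrow> bool" where
  "min_out_neighbor E w v u \<longleftrightarrow> (v, u) \<in> E \<and> (\<forall>u'. (v, u') \<in> E \<longrightarrow> w (v, u) \<le> w (v, u'))"

text \<open>K: the (finite) set of tokens; pos t k: the node
  holding token k after t iterations; w t: the edge weights after t iterations
  (w 0 = a); nxt t v: the out-neighbour to which node v passes its token(s) at
  iteration t (any minimum-weight out-edge; ties broken arbitrarily); delta: the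
  positive constant added to the weight of each used edge.\<close>

definition token_run ::
  "('v \<times> 'v) set \<Rightarrow> ('v \<times> 'v \<Rightarrow> real) \<Rightarrow> real \<Rightarrow> 'k set \<Rightarrow>
   (nat \<Rightarrow> 'k \<Rightarrow> 'v) \<Rightarrow> (nat \<Rightarrow> 'v \<times> 'v \<Rightarrow> real) \<Rightarrow> (nat \<Rightarrow> 'v \<Rightarrow> 'v) \<Rightarrow> bool" where
  "token_run E a delta K pos w nxt \<longleftrightarrow>
     w 0 = a \<and>
     (\<forall>t. \<forall>v \<in> pos t ` K. min_out_neighbor E (w t) v (nxt t v)) \<and>
     (\<forall>t. \<forall>k \<in> K. pos (Suc t) k = nxt t (pos t k)) \<and>
     (\<forall>t e. w (Suc t) e =
        (if \<exists>v \<in> pos t ` K. e = (v, nxt t v) then w t e + delta else w t e))"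

end

theory Submission
  imports Defs
begin

locale trun =
  fixes V :: "'v set" and E :: "('v \<times> 'v) set" and a :: "'v \<times> 'v \<Rightarrow> real"
    and delta :: real and K :: "'k set"
    and pos :: "nat \<Rightarrow> 'k \<Rightarrow> 'v" and w :: "nat \<Rightarrow> 'v \<times> 'v \<Rightarrow> real"
    and nxt :: "nat \<Rightarrow> 'v \<Rightarrow> 'v"
  assumes wd: "weighted_digraph V E a"
    and dpos: "delta > 0"
    and fK: "finite K" and neK: "K \<noteq> {}"
    and p0: "\<forall>k\<in>K. pos 0 k \<in> V"
    and tr: "token_run E a delta K pos w nxt"
begin

lemma minn: "v \<in> pos t ` K \<Longrightarrow> min_out_neighbor E (w t) v (nxt t v)"
  using tr unfolding token_run_def by blast

lemma posS: "k \<in> K \<Longrightarrow> pos (Suc t) k = nxt t (pos t k)"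
  using tr unfolding token_run_def by blast

lemma wS: "w (Suc t) e = (if \<exists>v \<in> pos t ` K. e = (v, nxt t v) then w t e + delta else w t e)"
  using tr unfolding token_run_def by blast

lemma EV: "E \<subseteq> V \<times> V" using wd unfolding weighted_digraph_def by blast
lemma fV: "finite V" using wd unfolding weighted_digraph_def by blast

lemma posV: "k \<in> K \<Longrightarrow> pos t k \<in> V"
proof (induction t)
  case 0 then show ?case using p0 by blast
next
  case (Suc t)
  have "(pos t k, nxt t (pos t k)) \<in> E" using minn[of "pos t k" t] Suc.prems
    unfolding min_out_neighbor_def by blast
  then show ?case using posS[OF Suc.prems, of t] EV by auto
qed

lemma w_step: "w t e \<le> w (Suc t) e"
  using wS[of t e] dpos by auto

lemma w_mono: "t \<le> s \<Longrightarrow> w t e \<le> w s e"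
proof (induction s)
  case 0 then show ?case by simp
next
  case (Suc s)
  then show ?case using w_step[of s e] by (cases "t = Suc s") auto
qed

definition INF_v :: "'v \<Rightarrow> bool" where
  "INF_v v \<longleftrightarrow> (\<forall>T. \<exists>t\<ge>T. v \<in> pos t ` K)"

lemma w_const:
  assumes "\<forall>t\<ge>T. \<not> (v \<in> pos t ` K \<and> nxt t v = u)" "T \<le> t"
  shows "w t (v,u) = w T (v,u)"
  using assms(2)
proof (induction t)
  case 0 then show ?case by simp
next
  case (Suc t)
  show ?case
  proof (cases "T = Suc t")
    case True then show ?thesis by simp
  next
    case False
    then have "T \<le> t" using Suc.prems by simp
    have "\<not> (v \<in> pos t ` K \<and> nxt t v = u)" using assms(1) \<open>T \<le> t\<close> by auto
    then have "w (Suc t) (v,u) = w t (v,u)" using wS[of t "(v,u)"] by auto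
    then show ?thesis using Suc.IH \<open>T \<le> t\<close> by simp
  qed
qed

lemma out_step:
  assumes "INF_v v" "(v,u) \<in> E"
  shows "\<exists>t\<ge>T. v \<in> pos t ` K \<and> nxt t v = u"
proof (rule ccontr)
  assume nc: "\<not> ?thesis"
  then have nc': "\<forall>t\<ge>T. \<not> (v \<in> pos t ` K \<and> nxt t v = u)" by blast
  define c where "c = w T (v,u)"
  define Out where "Out = {u'. (v,u') \<in> E}"
  have "Out \<subseteq> V" using EV unfolding Out_def by blast
  then have fO: "finite Out" using fV finite_subset by blast
  define P where "P t = (\<Sum>u'\<in>Out. min (w t (v,u')) (c + delta))" for t
  have Pmono: "P t \<le> P s" if "t \<le> s" for t s
    unfolding P_def by (intro sum_mono min.mono w_mono[OF that] order_refl)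
  have Pbound: "P t \<le> real (card Out) * (c + delta)" for t
  proof -
    have "P t \<le> (\<Sum>u'\<in>Out. c + delta)" unfolding P_def by (intro sum_mono min.cobounded2)
    then show ?thesis by (simp only: sum_constant of_nat_mult)
  qed
  have Pjump: "P (Suc t) \<ge> P t + delta" if "t \<ge> T" "v \<in> pos t ` K" for t
  proof -
    let ?u0 = "nxt t v"
    have mo: "min_out_neighbor E (w t) v ?u0" using minn[OF that(2)] .
    then have u0O: "?u0 \<in> Out" unfolding Out_def min_out_neighbor_def by blast
    have "w t (v, ?u0) \<le> w t (v,u)" using mo assms(2) unfolding min_out_neighbor_def by blast
    also have "\<dots> = c" unfolding c_def using w_const[OF nc' that(1)] .
    finally have le: "w t (v, ?u0) \<le> c" .
    have inc: "w (Suc t) (v, ?u0) = w t (v, ?u0) + delta" using wS[of t "(v,?u0)"] that(2) by auto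
    have e1: "P (Suc t) = min (w (Suc t) (v,?u0)) (c + delta) + (\<Sum>u'\<in>Out - {?u0}. min (w (Suc t) (v,u')) (c + delta))"
      unfolding P_def using sum.remove[OF fO u0O] by blast
    have e2: "min (w (Suc t) (v,?u0)) (c + delta) = min (w t (v,?u0)) (c + delta) + delta"
      using inc le dpos by simp
    have e3: "(\<Sum>u'\<in>Out - {?u0}. min (w (Suc t) (v,u')) (c + delta)) \<ge> (\<Sum>u'\<in>Out - {?u0}. min (w t (v,u')) (c + delta))"
      by (intro sum_mono min.mono w_step order_refl)
    have "P (Suc t) \<ge> min (w t (v,?u0)) (c + delta) + delta + (\<Sum>u'\<in>Out - {?u0}. min (w t (v,u')) (c + delta))"
      using e1 e2 e3 by linarith
    moreover have "P t = min (w t (v,?u0)) (c + delta) + (\<Sum>u'\<in>Out - {?u0}. min (w t (v,u')) (c + delta))"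
      unfolding P_def using sum.remove[OF fO u0O] by blast
    ultimately show ?thesis by simp
  qed
  have grow: "\<exists>s\<ge>T. P s \<ge> P T + real n * delta" for n
  proof (induction n)
    case 0 then show ?case by auto
  next
    case (Suc n)
    then obtain s where s: "s \<ge> T" "P s \<ge> P T + real n * delta" by blast
    obtain t where t: "t \<ge> s" "v \<in> pos t ` K" using assms(1) unfolding INF_v_def by blast
    have "P (Suc t) \<ge> P t + delta" using Pjump t s by simp
    moreover have "P t \<ge> P s" using Pmono t by simp
    ultimately have "P (Suc t) \<ge> P T + real (Suc n) * delta" using s by (simp add: algebra_simps)
    then show ?case using s t by (intro exI[of _ "Suc t"]) auto
  qed
  obtain n where n: "real (card Out) * (c + delta) - P T < real n * delta"
    using ex_less_of_nat_mult[OF dpos] by blast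
  obtain s where "P s \<ge> P T + real n * delta" using grow by blast
  then show False using Pbound[of s] n by linarith
qed

lemma INF_step: "INF_v v \<Longrightarrow> (v,u) \<in> E \<Longrightarrow> INF_v u"
  unfolding INF_v_def
proof
  fix T assume iv: "\<forall>T. \<exists>t\<ge>T. v \<in> pos t ` K" and e: "(v,u) \<in> E"
  obtain t where t: "t \<ge> T" "v \<in> pos t ` K" "nxt t v = u"
    using out_step[OF iv[folded INF_v_def] e] by blast
  then obtain k where "k \<in> K" "pos t k = v" by blast
  then have "u \<in> pos (Suc t) ` K" using posS t by force
  moreover have "Suc t \<ge> T" using t(1) by simp
  ultimately show "\<exists>t\<ge>T. u \<in> pos t ` K" by blast
qed

lemma INF_trancl:
  assumes "(v,u) \<in> E\<^sup>+" "INF_v v" shows "INF_v u"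
  using assms(1)
proof (induction rule: trancl_induct)
  case (base y) show ?case using INF_step[OF assms(2) base] .
next
  case (step y z) show ?case using INF_step[OF step.IH step.hyps(2)] .
qed

lemma INF_exists: "\<exists>v\<in>V. INF_v v"
proof (rule ccontr)
  assume "\<not> ?thesis"
  then have "\<forall>v\<in>V. \<exists>T. \<forall>t\<ge>T. v \<notin> pos t ` K" unfolding INF_v_def by blast
  then obtain f where f: "\<forall>v\<in>V. \<forall>t\<ge>f v. v \<notin> pos t ` K" by metis
  define T where "T = Max (f ` V)"
  obtain k where k: "k \<in> K" using neK by blast
  have pv: "pos T k \<in> V" using posV[OF k] .
  have "f (pos T k) \<le> Max (f ` V)" using fV pv by simp
  then have le: "f (pos T k) \<le> T" unfolding T_def .
  have "pos T k \<notin> pos T ` K" using f pv le by simp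
  then show False using k by blast
qed

end

theorem lemma4p3:
  fixes V :: "'v set" and E :: "('v \<times> 'v) set" and a :: "'v \<times> 'v \<Rightarrow> real"
    and delta :: real and K :: "'k set"
    and pos :: "nat \<Rightarrow> 'k \<Rightarrow> 'v" and w :: "nat \<Rightarrow> 'v \<times> 'v \<Rightarrow> real"
    and nxt :: "nat \<Rightarrow> 'v \<Rightarrow> 'v"
  assumes "weighted_digraph V E a"
    and "strongly_connected V E"
    and "delta > 0"
    and "finite K" and "K \<noteq> {}"
    and "\<forall>k\<in>K. pos 0 k \<in> V"
    and "token_run E a delta K pos w nxt"
  shows "\<exists>N. \<forall>v\<in>V. \<exists>t\<le>N. \<exists>k\<in>K. pos t k = v"
proof -
  interpret trun V E a delta K pos w nxt
    using assms by unfold_locales auto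
  obtain v0 where v0: "v0 \<in> V" "INF_v v0" using INF_exists by blast
  have "\<forall>u\<in>V. \<exists>t. u \<in> pos t ` K"
  proof
    fix u assume u: "u \<in> V"
    have "INF_v u"
    proof (cases "u = v0")
      case True then show ?thesis using v0(2) by simp
    next
      case False
      then have "v0 \<noteq> u" by simp
      have sc: "\<forall>u\<in>V. \<forall>v\<in>V. u \<noteq> v \<longrightarrow> (u, v) \<in> E\<^sup>+" using assms(2) unfolding strongly_connected_def .
      have "(v0,u) \<in> E\<^sup>+" using sc[rule_format, OF v0(1) u \<open>v0 \<noteq> u\<close>] .
      then show ?thesis using INF_trancl[OF _ v0(2)] by blast
    qed
    then have "\<exists>t\<ge>0. u \<in> pos t ` K" unfolding INF_v_def by (rule spec)
    then show "\<exists>t. u \<in> pos t ` K" by blast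
  qed
  from bchoice[OF this] obtain f where f: "\<forall>u\<in>V. u \<in> pos (f u) ` K" by blast
  have "\<forall>v\<in>V. \<exists>t\<le>Max (f ` V). \<exists>k\<in>K. pos t k = v"
  proof
    fix v assume v: "v \<in> V"
    have le: "f v \<le> Max (f ` V)" using Max_ge[OF finite_imageI[OF fV] imageI[OF v]] .
    have "v \<in> pos (f v) ` K" using f v by blast
    then obtain k where k: "v = pos (f v) k" "k \<in> K" by (rule imageE)
    have "\<exists>k\<in>K. pos (f v) k = v" by (rule bexI[where P="\<lambda>k. pos (f v) k = v", OF k(1)[symmetric] k(2)])
    then show "\<exists>t\<le>Max (f ` V). \<exists>k\<in>K. pos t k = v" using le by blast
  qed
  then show ?thesis by (rule exI)
qed

end
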